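(* Let $f_1,\dots,f_T\in\mathcal F_X(\alpha,l,G)$, and let $x_1,\dots,x_T$ be the outputs of online gradient descent with stepsize $1/l$: $$x_1=x_0,\qquad x_t=\Pi_X\big(x_{t-1}-\tfrac1l\nabla f_{t-1}(x_{t-1})\big)\ \text{ for } t\ge2.$$ Then $$\sum_{t=1}^T\|x_t-x_{t-1}\|^2\le\frac{2G}{l(1-\kappa)}\sum_{t=1}^T\|\theta_t-\theta_{t-1}\|,$$ where $\kappa=\sqrt{1-\alpha/l}$, $\theta_t=\arg\min_{x\in X}f_t(x)$ for $t\ge1$, and $\theta_0=x_0$.
   Context: $X\subseteq\mathbb R^n$ is nonempty, compact and convex, $\Pi_X$ is projection onto $X$, and $x_0\in X$. $\mathcal F_X(\alpha,l,G)$ (with $0<\alpha\le l$) is the set of differentiable $f:\mathbb R^n\to\mathbb R$ that are $\alpha$-strongly convex and $l$-smooth on $\mathbb R^n$ and satisfy $\|\nabla f(x)\|\le G$ for $x\in X$. *)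

theory Defs
  imports "HOL-Analysis.Analysis"
begin

text \<open>Gradient of a function on a Euclidean space (unique when f is differentiable).\<close>
definition grad :: "('a::euclidean_space \<Rightarrow> real) \<Rightarrow> 'a \<Rightarrow> 'a" where
  "grad f x = (SOME g. (f has_derivative (\<lambda>h. g \<bullet> h)) (at x))"

definition strongly_convex :: "real \<Rightarrow> ('a::euclidean_space \<Rightarrow> real) \<Rightarrow> bool" where
  "strongly_convex \<alpha> f \<longleftrightarrow>
     (\<forall>x y t. 0 \<le> t \<and> t \<le> 1 \<longrightarrow>
        f (t *\<^sub>R x + (1 - t) *\<^sub>R y) \<le> t * f x + (1 - t) * f y - \<alpha> / 2 * t * (1 - t) * (norm (x - y))\<^sup>2)"

definition smooth_grad :: "real \<Rightarrow> ('a::euclidean_space \<Rightarrow> real) \<Rightarrow> bool" where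
  "smooth_grad l f \<longleftrightarrow> (\<forall>x y. norm (grad f x - grad f y) \<le> l * norm (x - y))"

definition FX :: "'a::euclidean_space set \<Rightarrow> real \<Rightarrow> real \<Rightarrow> real \<Rightarrow> ('a \<Rightarrow> real) set" where
  "FX X \<alpha> l G = {f. (\<forall>x. f differentiable (at x)) \<and> strongly_convex \<alpha> f \<and> smooth_grad l f
                      \<and> (\<forall>x\<in>X. norm (grad f x) \<le> G)}"

fun ogd :: "'a::euclidean_space set \<Rightarrow> real \<Rightarrow> (nat \<Rightarrow> 'a \<Rightarrow> real) \<Rightarrow> 'a \<Rightarrow> nat \<Rightarrow> 'a" where
  "ogd X l f x0 0 = x0"
| "ogd X l f x0 (Suc 0) = x0"
| "ogd X l f x0 (Suc (Suc t)) =
     closest_point X (ogd X l f x0 (Suc t) - (1 / l) *\<^sub>R grad (f (Suc t)) (ogd X l f x0 (Suc t)))"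

definition theta :: "'a::euclidean_space set \<Rightarrow> (nat \<Rightarrow> 'a \<Rightarrow> real) \<Rightarrow> 'a \<Rightarrow> nat \<Rightarrow> 'a" where
  "theta X f x0 t = (if t = 0 then x0 else arg_min_on (f t) X)"

end

theory Submission
  imports Defs
begin

lemma grad_works:
  fixes f :: "'a::euclidean_space \<Rightarrow> real"
  assumes "f differentiable (at x)"
  shows "(f has_derivative (\<lambda>h. grad f x \<bullet> h)) (at x)"
proof -
  obtain f' where d: "(f has_derivative f') (at x)" using assms differentiable_def by blast
  have lin: "linear f'" using has_derivative_linear[OF d] .
  have "f' = (\<lambda>h. adjoint f' 1 \<bullet> h)"
    using adjoint_works[OF lin, of _ 1] by (auto simp: inner_commute)
  with d have "\<exists>g. (f has_derivative (\<lambda>h. g \<bullet> h)) (at x)" by metis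
  then show ?thesis unfolding grad_def by (rule someI_ex)
qed

lemma line_deriv:
  fixes f :: "'a::euclidean_space \<Rightarrow> real"
  assumes "f differentiable (at (x + t *\<^sub>R d))"
  shows "((\<lambda>s. f (x + s *\<^sub>R d)) has_real_derivative (grad f (x + t *\<^sub>R d) \<bullet> d)) (at t within S)"
proof -
  have l: "((\<lambda>s. x + s *\<^sub>R d) has_derivative (\<lambda>s. s *\<^sub>R d)) (at t within S)"
    by (auto intro!: derivative_eq_intros)
  have "((\<lambda>s. f (x + s *\<^sub>R d)) has_derivative (\<lambda>s. grad f (x + t *\<^sub>R d) \<bullet> (s *\<^sub>R d))) (at t within S)"
    using has_derivative_compose[OF l has_derivative_at_withinI[OF grad_works[OF assms]]] 
    by (simp add: o_def)
  moreover have "(\<lambda>s. grad f (x + t *\<^sub>R d) \<bullet> (s *\<^sub>R d)) = (*) (grad f (x + t *\<^sub>R d) \<bullet> d)"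
    by (auto simp: mult.commute)
  ultimately show ?thesis by (simp add: has_field_derivative_def)
qed

lemma sc_first_order:
  fixes f :: "'a::euclidean_space \<Rightarrow> real"
  assumes sc: "strongly_convex \<alpha> f" and df: "\<forall>z. f differentiable (at z)"
  shows "f x + grad f x \<bullet> (y - x) + \<alpha> / 2 * (norm (y - x))\<^sup>2 \<le> f y"
proof -
  define d where "d = y - x"
  define q where "q = (\<lambda>t. (f (x + t *\<^sub>R d) - f (x + 0 *\<^sub>R d)) / (t - 0))"
  define h where "h = (\<lambda>t::real. f y - f x - \<alpha> / 2 * (1 - t) * (norm d)\<^sup>2)"
  have "((\<lambda>s. f (x + s *\<^sub>R d)) has_real_derivative (grad f (x + 0 *\<^sub>R d) \<bullet> d)) (at 0 within {0<..})"
    using df by (intro line_deriv) auto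
  hence q: "(q \<longlongrightarrow> grad f x \<bullet> d) (at_right 0)"
    unfolding q_def has_field_derivative_iff by simp
  have h: "(h \<longlongrightarrow> h 0) (at_right 0)"
    unfolding h_def by (intro tendsto_intros)
  have ev: "eventually (\<lambda>t. q t \<le> h t) (at_right 0)"
    unfolding eventually_at_right[OF zero_less_one]
  proof (intro exI conjI allI impI)
    fix t :: real assume t: "0 < t" "t < 1"
    have "f (t *\<^sub>R y + (1 - t) *\<^sub>R x) \<le> t * f y + (1 - t) * f x - \<alpha> / 2 * t * (1 - t) * (norm (y - x))\<^sup>2"
      using sc t unfolding strongly_convex_def by auto
    moreover have "t *\<^sub>R y + (1 - t) *\<^sub>R x = x + t *\<^sub>R d" unfolding d_def by (simp add: algebra_simps)
    ultimately have "f (x + t *\<^sub>R d) - f x \<le> t * h t" unfolding h_def d_def by (simp add: algebra_simps)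
    then show "q t \<le> h t" unfolding q_def using t by (simp add: divide_simps mult.commute)
  qed (simp)
  have "grad f x \<bullet> d \<le> h 0"
    by (rule tendsto_le[OF trivial_limit_at_right_real h q ev])
  then show ?thesis unfolding h_def d_def by simp
qed

lemma descent:
  fixes f :: "'a::euclidean_space \<Rightarrow> real"
  assumes sm: "smooth_grad l f" and df: "\<forall>z. f differentiable (at z)"
  shows "f y \<le> f x + grad f x \<bullet> (y - x) + l / 2 * (norm (y - x))\<^sup>2"
proof -
  define d where "d = y - x"
  define \<psi> where "\<psi> = (\<lambda>t. f (x + t *\<^sub>R d) - t * (grad f x \<bullet> d) - l / 2 * t\<^sup>2 * (norm d)\<^sup>2)"
  have "\<psi> 1 \<le> \<psi> 0"
  proof (rule DERIV_nonpos_imp_nonincreasing[of 0 1])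
    fix t :: real assume t: "0 \<le> t" "t \<le> 1"
    have D: "(\<psi> has_real_derivative (grad f (x + t *\<^sub>R d) \<bullet> d - grad f x \<bullet> d - l * t * (norm d)\<^sup>2)) (at t)"
      unfolding \<psi>_def using line_deriv[of f x t d UNIV] df
      by (auto intro!: derivative_eq_intros simp: power2_eq_square)
    have "grad f (x + t *\<^sub>R d) \<bullet> d - grad f x \<bullet> d = (grad f (x + t *\<^sub>R d) - grad f x) \<bullet> d"
      by (simp add: inner_diff_left)
    also have "\<dots> \<le> norm (grad f (x + t *\<^sub>R d) - grad f x) * norm d"
      by (rule norm_cauchy_schwarz)
    also have "\<dots> \<le> (l * norm (t *\<^sub>R d)) * norm d"
      using sm[unfolded smooth_grad_def, rule_format, of "x + t *\<^sub>R d" x] by (intro mult_right_mono) auto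
    also have "\<dots> = l * t * (norm d)\<^sup>2" using t by (simp add: power2_eq_square)
    finally show "\<exists>y. DERIV \<psi> t :> y \<and> y \<le> 0" using D by (intro exI[of _ "grad f (x + t *\<^sub>R d) \<bullet> d - grad f x \<bullet> d - l * t * (norm d)\<^sup>2"]) auto
  qed simp
  then show ?thesis unfolding \<psi>_def d_def by simp
qed

lemma contraction:
  fixes f :: "'a::euclidean_space \<Rightarrow> real"
  assumes fX: "f \<in> FX X \<alpha> l G" and X: "closed X" "convex X" "X \<noteq> {}"
    and x: "x \<in> X" and th: "\<theta> \<in> X" and mn: "\<forall>z\<in>X. f \<theta> \<le> f z"
    and al: "0 < \<alpha>" "\<alpha> \<le> l"
  shows "norm (closest_point X (x - (1 / l) *\<^sub>R grad f x) - \<theta>) \<le> sqrt (1 - \<alpha> / l) * norm (x - \<theta>)"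
proof -
  have df: "\<forall>z. f differentiable (at z)" and sc: "strongly_convex \<alpha> f" and sm: "smooth_grad l f"
    using fX unfolding FX_def by auto
  define g where "g = grad f x"
  define y where "y = closest_point X (x - (1 / l) *\<^sub>R g)"
  have yX: "y \<in> X" unfolding y_def using X closest_point_in_set by blast
  have P0: "(x - (1 / l) *\<^sub>R g - y) \<bullet> (\<theta> - y) \<le> 0"
    unfolding y_def using closest_point_dot[OF X(2,1) th] .
  define a where "a = x - \<theta>"
  define b where "b = y - \<theta>"
  have l0: "l > 0" using al by linarith
  have "(x - (1 / l) *\<^sub>R g - y) \<bullet> (\<theta> - y) = (a - b) \<bullet> (- b) + (1 / l) * (g \<bullet> b)"
    unfolding a_def b_def by (simp add: algebra_simps inner_diff_left inner_diff_right)
  with P0 have "(1 / l) * (g \<bullet> b) \<le> a \<bullet> b - b \<bullet> b" by (simp add: algebra_simps inner_diff_left)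
  hence P: "g \<bullet> b \<le> l * (a \<bullet> b) - l * (b \<bullet> b)" using l0
    by (simp add: field_simps)
  have D: "f y \<le> f x + g \<bullet> (y - x) + l / 2 * (norm (y - x))\<^sup>2"
    unfolding g_def by (rule descent[OF sm df])
  have S: "f x + g \<bullet> (\<theta> - x) + \<alpha> / 2 * (norm (\<theta> - x))\<^sup>2 \<le> f \<theta>"
    unfolding g_def by (rule sc_first_order[OF sc df])
  have M: "f \<theta> \<le> f y" using mn yX by auto
  have e1: "y - x = b - a" "\<theta> - x = - a" unfolding a_def b_def by auto
  have n1: "(norm (b - a))\<^sup>2 = b \<bullet> b - 2 * (a \<bullet> b) + a \<bullet> a"
    by (simp add: power2_norm_eq_inner inner_diff_left inner_diff_right inner_commute)
  have n2: "(norm (- a))\<^sup>2 = a \<bullet> a" by (simp add: power2_norm_eq_inner)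
  have "g \<bullet> (b - a) = g \<bullet> b - g \<bullet> a" "g \<bullet> (- a) = - (g \<bullet> a)" by (auto simp: inner_diff_right)
  with D S M e1 n1 n2 P have "\<alpha> / 2 * (a \<bullet> a) \<le> l / 2 * (a \<bullet> a) - l / 2 * (b \<bullet> b)"
    by (simp add: algebra_simps)
  hence "l * (b \<bullet> b) \<le> (l - \<alpha>) * (a \<bullet> a)" by (simp add: algebra_simps)
  hence "b \<bullet> b \<le> (1 - \<alpha> / l) * (a \<bullet> a)" using l0 by (simp add: field_simps)
  hence "(norm b)\<^sup>2 \<le> (1 - \<alpha> / l) * (norm a)\<^sup>2" by (simp add: power2_norm_eq_inner)
  hence "sqrt ((norm b)\<^sup>2) \<le> sqrt ((1 - \<alpha> / l) * (norm a)\<^sup>2)" by (rule real_sqrt_le_mono)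
  thus ?thesis unfolding a_def b_def y_def g_def by (simp add: real_sqrt_mult)
qed

theorem lemma8:
  fixes X :: "'a::euclidean_space set" and f :: "nat \<Rightarrow> 'a \<Rightarrow> real"
    and x0 :: 'a and \<alpha> l G :: real and T :: nat
  assumes "X \<noteq> {}" and "compact X" and "convex X" and "x0 \<in> X"
    and "0 < \<alpha>" and "\<alpha> \<le> l"
    and "\<forall>t\<in>{1..T}. f t \<in> FX X \<alpha> l G"
  shows "(\<Sum>t=1..T. (norm (ogd X l f x0 t - ogd X l f x0 (t - 1)))\<^sup>2)
     \<le> 2 * G / (l * (1 - sqrt (1 - \<alpha> / l))) * (\<Sum>t=1..T. norm (theta X f x0 t - theta X f x0 (t - 1)))"
proof -
  note ne = assms(1) and cpt = assms(2) and cvx = assms(3) and x0 = assms(4)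
    and al = assms(5,6) and FF = assms(7)
  have cl: "closed X" using cpt compact_imp_closed by blast
  have l0: "l > 0" using al by linarith
  define \<kappa> where "\<kappa> = sqrt (1 - \<alpha> / l)"
  have k0: "0 \<le> \<kappa>" unfolding \<kappa>_def using al l0 by simp
  have k1: "\<kappa> < 1" unfolding \<kappa>_def using al l0 by (simp add: field_simps)
  define xs where "xs = ogd X l f x0"
  define th where "th = theta X f x0"
  define e where "e = (\<lambda>t. norm (xs t - th t))"
  define d where "d = (\<lambda>t. norm (th t - th (t - 1)))"
  have xsX: "xs t \<in> X" for t
  proof (cases t)
    case (Suc n) then show ?thesis
      by (cases n) (auto simp: xs_def x0 closest_point_in_set[OF cl ne])
  qed (simp add: xs_def x0)
  have step: "xs (Suc t) = closest_point X (xs t - (1 / l) *\<^sub>R grad (f t) (xs t))" if t1: "t \<ge> 1" for t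
  proof -
    obtain n where "t = Suc n" using t1 by (cases t) auto
    then show ?thesis by (simp add: xs_def)
  qed
  have thX: "th t \<in> X \<and> (\<forall>z\<in>X. f t (th t) \<le> f t z)" if "1 \<le> t" "t \<le> T" for t
  proof -
    have "\<forall>z. f t differentiable (at z)" using FF that unfolding FX_def by auto
    hence "continuous_on X (f t)"
      by (intro differentiable_imp_continuous_on) (simp add: differentiable_at_imp_differentiable_on)
    then obtain m where m: "m \<in> X" "\<forall>y\<in>X. f t m \<le> f t y"
      using continuous_attains_inf[OF cpt ne] by blast
    have "arg_min_on (f t) X \<in> X \<and> (\<forall>z\<in>X. f t (arg_min_on (f t) X) \<le> f t z)"
      unfolding arg_min_on_def
      by (rule arg_minI[where Q="\<lambda>y. y \<in> X \<and> (\<forall>z\<in>X. f t y \<le> f t z)", of _ m]) (use m in \<open>auto simp: not_less\<close>)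
    then show ?thesis using that by (simp add: th_def theta_def)
  qed
  have contr: "norm (xs (Suc t) - th t) \<le> \<kappa> * e t" if "1 \<le> t" "t \<le> T" for t
    unfolding step[OF that(1)] e_def \<kappa>_def
    using contraction[of "f t" X \<alpha> l G "xs t" "th t"] FF that thX[OF that] cl cvx ne xsX al by auto
  have mv: "norm (xs (Suc t) - xs t) \<le> G / l" if "1 \<le> t" "t \<le> T" for t
  proof -
    have "norm (xs (Suc t) - xs t) = dist (closest_point X (xs t - (1 / l) *\<^sub>R grad (f t) (xs t))) (closest_point X (xs t))"
      unfolding step[OF that(1)] closest_point_self[OF xsX] by (simp add: dist_norm)
    also have "\<dots> \<le> dist (xs t - (1 / l) *\<^sub>R grad (f t) (xs t)) (xs t)"
      by (rule closest_point_lipschitz[OF cvx cl ne])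
    also have "\<dots> = norm (grad (f t) (xs t)) / l" using l0 by (simp add: dist_norm)
    also have "\<dots> \<le> G / l" using FF that xsX l0 unfolding FX_def by (auto intro!: divide_right_mono)
    finally show ?thesis .
  qed
  have e0: "e 0 = 0" unfolding e_def xs_def th_def theta_def by simp
  define c where "c = G / l * (1 + \<kappa>)"
  have termb: "(norm (xs t - xs (t - 1)))\<^sup>2 \<le> c * e (t - 1)" if tt: "1 \<le> t" "t \<le> T" for t
  proof (cases "t = 1")
    case True then show ?thesis using e0 by (simp add: xs_def)
  next
    case False
    then obtain s where s: "t = Suc s" "1 \<le> s" "s \<le> T" using tt False by (cases t) auto
    define n where "n = norm (xs (Suc s) - xs s)"
    have n1: "n \<le> G / l" unfolding n_def by (rule mv[OF s(2,3)])
    have "n \<le> norm (xs (Suc s) - th s) + norm (th s - xs s)" unfolding n_def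
      by (rule order_trans[OF _ norm_triangle_ineq]) simp
    also have "\<dots> \<le> \<kappa> * e s + e s" using contr[OF s(2,3)] by (simp add: e_def norm_minus_commute)
    finally have n2: "n \<le> (1 + \<kappa>) * e s" by (simp add: algebra_simps)
    have n0: "0 \<le> n" unfolding n_def by simp
    have "n\<^sup>2 = n * n" by (simp add: power2_eq_square)
    also have "\<dots> \<le> G / l * ((1 + \<kappa>) * e s)"
      using n0 n1 n2 by (meson mult_mono order_trans)
    finally show ?thesis using s unfolding n_def c_def by simp
  qed
  have induc: "(1 - \<kappa>) * (\<Sum>s=1..n. e s) + \<kappa> * e n \<le> (\<Sum>s=1..n. d s)" if "1 \<le> n" "n \<le> T" for n
    using that
  proof (induction n)
    case 0 then show ?case by simp
  next
    case (Suc n)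
    show ?case
    proof (cases "n = 0")
      case True then show ?thesis by (simp add: e_def d_def th_def theta_def xs_def algebra_simps norm_minus_commute)
    next
      case False
      hence n: "1 \<le> n" "n \<le> T" using Suc by auto
      have IH: "(1 - \<kappa>) * (\<Sum>s=1..n. e s) + \<kappa> * e n \<le> (\<Sum>s=1..n. d s)" using Suc.IH n by auto
      have "e (Suc n) \<le> norm (xs (Suc n) - th n) + norm (th n - th (Suc n))"
        unfolding e_def by (rule order_trans[OF _ norm_triangle_ineq]) simp
      also have "\<dots> \<le> \<kappa> * e n + d (Suc n)" using contr[OF n] by (simp add: d_def norm_minus_commute)
      finally have "e (Suc n) \<le> \<kappa> * e n + d (Suc n)" .
      then show ?thesis using IH by (simp add: algebra_simps)
    qed
  qed
  have shift: "(\<Sum>t=1..n. e (t - 1)) + e n = e 0 + (\<Sum>t=1..n. e t)" for n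
    by (induction n) auto
  have epos: "e t \<ge> 0" for t unfolding e_def by simp
  have dpos: "0 \<le> (\<Sum>t=1..T. d t)" unfolding d_def by (simp add: sum_nonneg)
  show ?thesis
  proof (cases "T = 0")
    case True then show ?thesis by simp
  next
    case False
    have "f 1 \<in> FX X \<alpha> l G" using FF False by auto
    hence "norm (grad (f 1) x0) \<le> G" using x0 unfolding FX_def by auto
    hence G0: "0 \<le> G" using norm_ge_zero[of "grad (f 1) x0"] by linarith
    have c0: "0 \<le> c" unfolding c_def using G0 l0 k0 by simp
    have "(\<Sum>t=1..T. (norm (xs t - xs (t - 1)))\<^sup>2) \<le> (\<Sum>t=1..T. c * e (t - 1))"
      by (rule sum_mono) (use termb in auto)
    also have "\<dots> = c * (\<Sum>t=1..T. e (t - 1))" by (simp add: sum_distrib_left)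
    also have "\<dots> \<le> c * (\<Sum>t=1..T. e t)"
      using shift[of T] e0 epos[of T] c0 by (intro mult_left_mono) auto
    also have "\<dots> \<le> c * ((\<Sum>t=1..T. d t) / (1 - \<kappa>))"
    proof (intro mult_left_mono c0)
      have "(1 - \<kappa>) * (\<Sum>s=1..T. e s) \<le> (\<Sum>s=1..T. d s)"
      proof -
        have "(1 - \<kappa>) * (\<Sum>s=1..T. e s) + \<kappa> * e T \<le> (\<Sum>s=1..T. d s)" using induc[of T] False by auto
        moreover have "0 \<le> \<kappa> * e T" using k0 epos[of T] by simp
        ultimately show ?thesis by linarith
      qed
      then show "(\<Sum>t=1..T. e t) \<le> (\<Sum>t=1..T. d t) / (1 - \<kappa>)" using k1 by (simp add: field_simps)
    qed
    also have "\<dots> \<le> 2 * G / (l * (1 - \<kappa>)) * (\<Sum>t=1..T. d t)"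
    proof -
      have "c \<le> 2 * G / l" unfolding c_def using k1 G0 l0 by (simp add: field_simps mult_left_mono)
      hence "c * ((\<Sum>t=1..T. d t) / (1 - \<kappa>)) \<le> 2 * G / l * ((\<Sum>t=1..T. d t) / (1 - \<kappa>))"
        using dpos k1 by (intro mult_right_mono) auto
      then show ?thesis by (simp add: field_simps)
    qed
    finally show ?thesis unfolding xs_def th_def d_def \<kappa>_def .
  qed
qed

end
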